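(* Let $n\ge 4$, let $K'\subseteq[k]$ with $|K'|\ge n$, let $\pi$ assign to each $n$-element subset $S\subseteq[k]$ a string $\pi(S)$ of length $n$ that is an ordering of $S$, and suppose every $(n-1)$-element subset $R\subseteq K'$ is semi-frozen, with a fixed choice of semi-freezing function $h_R$ and wildcard index $w_R$. Then for every $Q\subseteq K'$ with $|Q|=n-2$ there exists $T_Q\subseteq Q$ with $|T_Q|=n-4$ such that $h_R(t)=h_{R'}(t)$ for all $t\in T_Q$ and all $(n-1)$-element sets $R,R'\subseteq K'$ containing $Q$.
   Context: $[k]=\{1,\dots,k\}$; $\pi(S)[i]$ is the letter at position $i\in[n]$ of $\pi(S)$. For a set $R\subseteq[k]$, $\mathcal U_R$ is the set of all sets $S\subseteq[k]$ with $R\subset S$ and $|S|=|R|+1$. A set $R$ with $|R|=n-1$ is semi-frozen with semi-freezing function $h_R$ and wildcard index $w_R$ if $h_R:R\to[n]$ is one-to-one, $w_R$ is the unique index of $[n]$ not in the image of $h_R$, and for every $r\in R$ and every $S\in\mathcal U_R$, either $\pi(S)[h_R(r)]=r$ or $\pi(S)[w_R]=r$. *)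

theory Defs
  imports Main
begin

text \<open>Strings are lists; positions are 1-indexed: pi(S)[i] = (pi S) ! (i - 1).\<close>

definition letter_at :: "nat list \<Rightarrow> nat \<Rightarrow> nat" where
  "letter_at s i = s ! (i - 1)"

definition valid_pi :: "nat \<Rightarrow> nat \<Rightarrow> (nat set \<Rightarrow> nat list) \<Rightarrow> bool" where
  "valid_pi k n pi \<longleftrightarrow>
     (\<forall>S. S \<subseteq> {1..k} \<and> card S = n \<longrightarrow>
        length (pi S) = n \<and> distinct (pi S) \<and> set (pi S) = S)"

definition U_set :: "nat \<Rightarrow> nat set \<Rightarrow> nat set set" where
  "U_set k R = {S. S \<subseteq> {1..k} \<and> R \<subset> S \<and> card S = card R + 1}"

definition semi_frozen ::
  "nat \<Rightarrow> nat \<Rightarrow> (nat set \<Rightarrow> nat list) \<Rightarrow> nat set \<Rightarrow> (nat \<Rightarrow> nat) \<Rightarrow> nat \<Rightarrow> bool" where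
  "semi_frozen k n pi R h w \<longleftrightarrow>
     card R = n - 1 \<and>
     inj_on h R \<and> h ` R \<subseteq> {1..n} \<and>
     {1..n} - h ` R = {w} \<and>
     (\<forall>r\<in>R. \<forall>S\<in>U_set k R.
        letter_at (pi S) (h r) = r \<or> letter_at (pi S) w = r)"

end

theory Submission
  imports Defs
begin

lemma key:
  fixes L :: "nat \<Rightarrow> nat"
  assumes Linj: "inj_on L {1..n}"
    and LS: "\<And>i. i \<in> {1..n} \<Longrightarrow> L i \<in> S"
    and SRR: "S \<subseteq> R \<union> R'"
    and hinj: "inj_on h R" and hrng: "h ` R \<subseteq> {1..n}"
    and hinj': "inj_on h' R'" and hrng': "h' ` R' \<subseteq> {1..n}"
    and H: "\<forall>r\<in>R. L (h r) = r \<or> L w = r"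
    and H': "\<forall>r\<in>R'. L (h' r) = r \<or> L w' = r"
    and st: "s \<in> R" "t \<in> R" "s \<in> R'" "t \<in> R'" "s \<noteq> t"
    and eq: "h t = h' s"
  shows False
proof -
  define v where "v = h t"
  have v: "v \<in> {1..n}" using hrng st v_def by auto
  have ht: "h t = v" and hs': "h' s = v" using eq v_def by auto
  have inL: "\<And>x y. x \<in> {1..n} \<Longrightarrow> y \<in> {1..n} \<Longrightarrow> L x = L y \<Longrightarrow> x = y"
    using Linj by (meson inj_on_def)
  show False
  proof (cases "L v = t")
    case True
    hence ws: "L w' = s" using H' st hs' by force
    have "L (h' t) = t" using H' st ws by force
    hence "h' t = v" using inL[of "h' t" v] True hrng' st v by auto
    thus False using hinj' hs' st by (metis inj_on_def)
  next
    case False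
    hence wt: "L w = t" using H st ht by force
    have hs: "L (h s) = s" using H st wt by force
    have hsr: "h s \<in> {1..n}" using hrng st by auto
    show False
    proof (cases "L v = s")
      case True
      hence "h s = v" using inL[OF hsr v] hs by auto
      thus False using hinj ht st by (metis inj_on_def)
    next
      case Fs: False
      define z where "z = L v"
      have "z \<in> R \<union> R'" using LS[OF v] SRR z_def by auto
      thus False
      proof
        assume zR: "z \<in> R"
        have "L (h z) = z" using H zR wt False z_def by force
        hence "h z = v" using inL[of "h z" v] hrng zR v z_def by auto
        hence "z = t" using hinj ht zR st by (metis inj_on_def)
        thus False using False z_def by simp
      next
        assume zR: "z \<in> R'"
        have ws2: "L w' = s" using H' st hs' Fs by force
        have "L (h' z) = z" using H' zR ws2 Fs z_def by force
        hence "h' z = v" using inL[of "h' z" v] hrng' zR v z_def by auto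
        hence "z = s" using hinj' hs' zR st by (metis inj_on_def)
        thus False using Fs z_def by simp
      qed
    qed
  qed
qed


lemma card_ext:
  assumes "finite R" "Q \<subseteq> R" "card R = card Q + 1"
  obtains a where "a \<notin> Q" "R = insert a Q"
proof -
  have fQ: "finite Q" using assms finite_subset by blast
  have "card (R - Q) = 1" using assms fQ by (simp add: card_Diff_subset)
  then obtain a where a: "R - Q = {a}" by (meson card_1_singletonE)
  hence "a \<notin> Q" "R = insert a Q" using assms(2) by auto
  thus thesis using that by blast
qed

theorem lemma3p9:
  fixes k n :: nat and K' :: "nat set" and pi :: "nat set \<Rightarrow> nat list"
    and h :: "nat set \<Rightarrow> nat \<Rightarrow> nat" and w :: "nat set \<Rightarrow> nat"
  assumes "n \<ge> 4"
    and "K' \<subseteq> {1..k}" and "card K' \<ge> n"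
    and "valid_pi k n pi"
    and "\<forall>R. R \<subseteq> K' \<and> card R = n - 1 \<longrightarrow> semi_frozen k n pi R (h R) (w R)"
  shows "\<forall>Q. Q \<subseteq> K' \<and> card Q = n - 2 \<longrightarrow>
           (\<exists>T. T \<subseteq> Q \<and> card T = n - 4 \<and>
              (\<forall>t\<in>T. \<forall>R R'. R \<subseteq> K' \<and> card R = n - 1 \<and> Q \<subseteq> R \<and>
                              R' \<subseteq> K' \<and> card R' = n - 1 \<and> Q \<subseteq> R'
                              \<longrightarrow> h R t = h R' t))"
proof (intro allI impI)
  fix Q assume Q: "Q \<subseteq> K' \<and> card Q = n - 2"
  have n4: "n \<ge> 4" by fact
  have fK: "finite K'" using assms(3) n4 card.infinite by fastforce
  have fQ: "finite Q" using Q fK finite_subset by blast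
  define Rs where "Rs = {R. R \<subseteq> K' \<and> card R = n - 1 \<and> Q \<subseteq> R}"
  have sfR: "\<And>R. R \<in> Rs \<Longrightarrow> semi_frozen k n pi R (h R) (w R)"
    using assms(5) Rs_def by blast
  have PP: "t = s" if RR: "R \<in> Rs" "R' \<in> Rs" and st: "s \<in> Q" "t \<in> Q"
    and eq: "h R t = h R' s" for R R' s t
  proof (cases "R = R'")
    case True
    have "inj_on (h R) R" using sfR[OF RR(1)] unfolding semi_frozen_def by blast
    moreover have "s \<in> R" "t \<in> R" using RR st Rs_def by auto
    ultimately show ?thesis using eq True by (metis inj_on_def)
  next
    case False
    have fR: "finite R" "finite R'" using RR Rs_def fK finite_subset by auto
    have cR: "card R = card Q + 1" "card R' = card Q + 1" using RR Rs_def Q n4 by auto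
    have QR: "Q \<subseteq> R" "Q \<subseteq> R'" using RR Rs_def by auto
    obtain a where a: "a \<notin> Q" "R = insert a Q"
      by (rule card_ext[OF fR(1) QR(1) cR(1)])
    obtain b where b: "b \<notin> Q" "R' = insert b Q"
      by (rule card_ext[OF fR(2) QR(2) cR(2)])
    have ab: "a \<noteq> b" using a b False by auto
    define S where "S = insert a R'"
    have aR': "a \<notin> R'" using a b ab by auto
    have bR: "b \<notin> R" using a b ab by auto
    have cS: "card S = n" using S_def aR' fR cR Q n4 by auto
    have SK: "S \<subseteq> {1..k}" using S_def RR Rs_def assms(2) a by auto
    have US: "S \<in> U_set k R" "S \<in> U_set k R'"
    proof -
      have "R \<subset> S" using S_def a b bR by auto
      moreover have "R' \<subset> S" using S_def aR' by auto
      moreover have "card S = card R + 1" "card S = card R' + 1" using cS cR Q n4 by auto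
      ultimately show "S \<in> U_set k R" "S \<in> U_set k R'" using SK by (auto simp: U_set_def)
    qed
    have vp: "length (pi S) = n" "distinct (pi S)" "set (pi S) = S"
      using assms(4) SK cS unfolding valid_pi_def by auto
    define L where "L = letter_at (pi S)"
    have Linj: "inj_on L {1..n}"
    proof (rule inj_onI)
      fix i j assume ij: "i \<in> {1..n}" "j \<in> {1..n}" "L i = L j"
      hence e: "pi S ! (i - 1) = pi S ! (j - 1)" by (simp add: L_def letter_at_def)
      have "i - 1 < length (pi S)" "j - 1 < length (pi S)" using ij(1,2) vp(1) by auto
      hence "i - 1 = j - 1" using e vp(2) nth_eq_iff_index_eq by blast
      thus "i = j" using ij(1,2) by auto
    qed
    have LS: "L i \<in> S" if "i \<in> {1..n}" for i
    proof -
      have "i - 1 < length (pi S)" using that vp(1) by auto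
      hence "pi S ! (i - 1) \<in> set (pi S)" by (rule nth_mem)
      thus ?thesis using vp(3) by (simp add: L_def letter_at_def)
    qed
    have SRR: "S \<subseteq> R \<union> R'" using S_def a by auto
    have sf1: "inj_on (h R) R" "h R ` R \<subseteq> {1..n}"
      "\<forall>r\<in>R. L (h R r) = r \<or> L (w R) = r"
      using sfR[OF RR(1)] US unfolding semi_frozen_def L_def by auto
    have sf2: "inj_on (h R') R'" "h R' ` R' \<subseteq> {1..n}"
      "\<forall>r\<in>R'. L (h R' r) = r \<or> L (w R') = r"
      using sfR[OF RR(2)] US unfolding semi_frozen_def L_def by auto
    show ?thesis
    proof (rule ccontr)
      assume ts: "t \<noteq> s"
      have m: "s \<in> R" "t \<in> R" "s \<in> R'" "t \<in> R'" using QR st by auto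
      show False
        by (rule key[OF Linj LS SRR sf1(1,2) sf2(1,2) sf1(3) sf2(3) m ts[symmetric] eq])
    qed
  qed
  define B where "B = {t\<in>Q. \<exists>R\<in>Rs. \<exists>R'\<in>Rs. h R t \<noteq> h R' t}"
  have BQ: "B \<subseteq> Q" using B_def by auto
  have cardB: "card B \<le> 2"
  proof (cases "Rs = {}")
    case True
    thus ?thesis using B_def by simp
  next
    case False
    then obtain R0 where R0: "R0 \<in> Rs" by blast
    define V where "V t = (\<lambda>R. h R t) ` Rs" for t
    have fRs: "finite Rs" unfolding Rs_def using fK
      by (rule rev_finite_subset[OF finite_Pow_iff[THEN iffD2]]) auto
    have Vsub: "V t \<subseteq> {1..n}" if tQ: "t \<in> Q" for t
    proof
      fix x assume "x \<in> V t"
      then obtain R where R: "R \<in> Rs" "x = h R t" unfolding V_def by blast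
      have "t \<in> R" using R tQ Rs_def by auto
      moreover have "h R ` R \<subseteq> {1..n}" using sfR[OF R(1)] unfolding semi_frozen_def by blast
      ultimately show "x \<in> {1..n}" using R by blast
    qed
    have fV: "finite (V t)" for t using fRs V_def by simp
    have disj: "\<forall>s\<in>Q. \<forall>t\<in>Q. s \<noteq> t \<longrightarrow> V s \<inter> V t = {}"
    proof (intro ballI impI)
      fix s t assume st: "s \<in> Q" "t \<in> Q" "s \<noteq> t"
      show "V s \<inter> V t = {}"
      proof (rule ccontr)
        assume "V s \<inter> V t \<noteq> {}"
        then obtain x where "x \<in> V s" "x \<in> V t" by blast
        then obtain R R' where RR: "R \<in> Rs" "R' \<in> Rs" "x = h R s" "x = h R' t"
          unfolding V_def by blast
        have "s = t" by (rule PP[OF RR(1,2) st(2,1)]) (use RR in simp)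
        thus False using st by simp
      qed
    qed
    have "(\<Sum>t\<in>Q. card (V t)) = card (\<Union>t\<in>Q. V t)"
      by (rule card_UN_disjoint[OF fQ, symmetric]) (use fV disj in auto)
    also have "\<dots> \<le> card {1..n}"
      by (rule card_mono) (use Vsub in auto)
    finally have S1: "(\<Sum>t\<in>Q. card (V t)) \<le> n" by simp
    have c1: "card (V t) \<ge> 1" if "t \<in> Q" for t
    proof -
      have "h R0 t \<in> V t" using R0 V_def by auto
      hence "V t \<noteq> {}" by auto
      hence "0 < card (V t)" using fV[of t] card_gt_0_iff by blast
      thus ?thesis by simp
    qed
    have c2: "card (V t) \<ge> 2" if tB: "t \<in> B" for t
    proof -
      obtain R R' where "R \<in> Rs" "R' \<in> Rs" "h R t \<noteq> h R' t" using tB B_def by blast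
      hence "{h R t, h R' t} \<subseteq> V t" using V_def by auto
      hence "card {h R t, h R' t} \<le> card (V t)" by (rule card_mono[OF fV])
      thus ?thesis using \<open>h R t \<noteq> h R' t\<close> by simp
    qed
    have "(\<Sum>t\<in>Q. card (V t)) = (\<Sum>t\<in>Q - B. card (V t)) + (\<Sum>t\<in>B. card (V t))"
      using sum.subset_diff[OF BQ fQ] by simp
    also have "\<dots> \<ge> (\<Sum>t\<in>Q - B. 1) + (\<Sum>t\<in>B. 2)"
      using c1 c2 BQ by (intro add_mono sum_mono) auto
    finally have "card (Q - B) + 2 * card B \<le> n" using S1 by simp
    moreover have "card (Q - B) = card Q - card B" using BQ fQ by (simp add: card_Diff_subset finite_subset)
    moreover have "card B \<le> card Q" using BQ fQ card_mono by blast
    ultimately show ?thesis using Q n4 by linarith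
  qed
  have "card (Q - B) \<ge> n - 4"
  proof -
    have "card B \<le> card Q" using BQ fQ card_mono by blast
    hence "card (Q - B) = card Q - card B" using BQ fQ by (simp add: card_Diff_subset finite_subset)
    thus ?thesis using cardB Q by linarith
  qed
  then obtain T where T: "T \<subseteq> Q - B" "card T = n - 4"
    by (meson obtain_subset_with_card_n)
  show "\<exists>T. T \<subseteq> Q \<and> card T = n - 4 \<and>
              (\<forall>t\<in>T. \<forall>R R'. R \<subseteq> K' \<and> card R = n - 1 \<and> Q \<subseteq> R \<and>
                              R' \<subseteq> K' \<and> card R' = n - 1 \<and> Q \<subseteq> R'
                              \<longrightarrow> h R t = h R' t)"
  proof (intro exI conjI ballI allI impI)
    show "T \<subseteq> Q" using T by blast
    show "card T = n - 4" using T by blast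
  next
    fix t R R' assume tT: "t \<in> T" and RR: "R \<subseteq> K' \<and> card R = n - 1 \<and> Q \<subseteq> R \<and>
                              R' \<subseteq> K' \<and> card R' = n - 1 \<and> Q \<subseteq> R'"
    have "R \<in> Rs" "R' \<in> Rs" using RR unfolding Rs_def by auto
    moreover have "t \<in> Q" "t \<notin> B" using tT T by auto
    ultimately show "h R t = h R' t" unfolding B_def by blast
  qed
qed

end
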